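(* $${}_4F_3\!\left(\tfrac13,\tfrac13,\tfrac23,\tfrac23;\tfrac43,\tfrac43,1;1\right)=\frac{\beta(1/3,1/3)^2}{27}.$$
   Context: $\beta$ is the Beta function and ${}_4F_3(a_1,a_2,a_3,a_4;b_1,b_2,b_3;x)=\sum_{n=0}^\infty\frac{(a_1)_n(a_2)_n(a_3)_n(a_4)_n}{(b_1)_n(b_2)_n(b_3)_n}\frac{x^n}{n!}$ with $(a)_n=a(a+1)\cdots(a+n-1)$, $(a)_0=1$. *)

theory Defs
  imports "HOL-Analysis.Analysis"
begin

definition hyp4F3_term :: "real \<Rightarrow> real \<Rightarrow> real \<Rightarrow> real \<Rightarrow> real \<Rightarrow> real \<Rightarrow> real \<Rightarrow> real \<Rightarrow> nat \<Rightarrow> real" where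
  "hyp4F3_term a1 a2 a3 a4 b1 b2 b3 x n =
     pochhammer a1 n * pochhammer a2 n * pochhammer a3 n * pochhammer a4 n /
     (pochhammer b1 n * pochhammer b2 n * pochhammer b3 n) * x ^ n / fact n"

definition hyp4F3 :: "real \<Rightarrow> real \<Rightarrow> real \<Rightarrow> real \<Rightarrow> real \<Rightarrow> real \<Rightarrow> real \<Rightarrow> real \<Rightarrow> real" where
  "hyp4F3 a1 a2 a3 a4 b1 b2 b3 x = (\<Sum>n. hyp4F3_term a1 a2 a3 a4 b1 b2 b3 x n)"

end

theory Submission
  imports Defs
begin

definition cc :: "nat \<Rightarrow> real" where "cc n = pochhammer (2/3) n / fact n"
definition aa :: "nat \<Rightarrow> real" where "aa n = cc n / (3*n+1)"

lemma poch13: "pochhammer (1/3::real) n * (3*n+1) = pochhammer (4/3) n"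
proof (induction n)
  case 0 then show ?case by simp
next
  case (Suc n)
  have "pochhammer (1/3::real) (Suc n) * (3*Suc n+1) = (pochhammer (1/3) n * (3*n+1)) * (n+4/3)"
    by (simp add: pochhammer_Suc field_simps)
  also have "\<dots> = pochhammer (4/3) (Suc n)" using Suc by (simp add: pochhammer_Suc)
  finally show ?case .
qed

lemma cc_nonneg: "cc n \<ge> 0" unfolding cc_def by (simp add: pochhammer_nonneg)
lemma aa_nonneg: "aa n \<ge> 0" unfolding aa_def using cc_nonneg by simp

lemma aux_alg: "A \<noteq> 0 \<Longrightarrow> k > 0 \<Longrightarrow> f > 0 \<Longrightarrow>
  A*A*C*C/((A*k)*(A*k)*f) * 1 / f = ((C::real)/f/k)^2"
  by (simp add: power2_eq_square field_simps)

lemma term_eq: "hyp4F3_term (1/3) (1/3) (2/3) (2/3) (4/3) (4/3) 1 1 n = (aa n)^2"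
proof -
  have p2: "pochhammer (1/3::real) n \<noteq> 0" by (simp add: pochhammer_eq_0_iff)
  have f: "pochhammer (1::real) n = fact n" by (simp add: pochhammer_fact)
  have "hyp4F3_term (1/3) (1/3) (2/3) (2/3) (4/3) (4/3) 1 1 n =
     pochhammer (1/3) n * pochhammer (1/3) n * pochhammer (2/3) n * pochhammer (2/3) n /
     ((pochhammer (1/3) n * real (3*n+1)) * (pochhammer (1/3) n * real (3*n+1)) * fact n) * 1 / fact n"
    unfolding hyp4F3_term_def f poch13 by simp
  also have "\<dots> = (aa n)^2" unfolding aa_def cc_def
    by (rule aux_alg) (use p2 in auto)
  finally show ?thesis .
qed

lemma cc_Suc: "cc (Suc n) = cc n * (n + 2/3) / (n+1)"
  unfolding cc_def by (simp add: pochhammer_Suc field_simps)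

lemma cc_le1: "cc n \<le> 1"
proof (induction n)
  case 0 then show ?case by (simp add: cc_def)
next
  case (Suc n)
  have "cc n * (real n + 2/3) \<le> 1 * (real n+1)"
    by (rule mult_mono) (use Suc in auto)
  then show ?case by (simp add: cc_Suc divide_le_eq)
qed

lemma gchoose_cc: "((-2/3) gchoose n) = (-1)^n * cc n"
  unfolding cc_def gbinomial_pochhammer by simp

lemma cc_binom_real:
  assumes "\<bar>z::real\<bar> < 1"
  shows "(\<lambda>n. cc n * z^n) sums ((1 - z) powr (-2/3))"
proof -
  have "\<bar>-z\<bar> < 1" using assms by simp
  from gen_binomial_real[OF this, of "-2/3"]
  have "(\<lambda>n. ((-2/3) gchoose n) * (-z)^n) sums (1 + -z) powr (-2/3)" .
  moreover have "((-2/3) gchoose n) * (-z)^n = cc n * z^n" for n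
    unfolding gchoose_cc by (simp add: power_minus' algebra_simps)
  ultimately show ?thesis by simp
qed

lemma cc_binom_complex:
  assumes "norm (z::complex) < 1"
  shows "(\<lambda>n. of_real (cc n) * z^n) sums ((1 - z) powr (-2/3))"
proof -
  have "norm (-z) < 1" using assms by simp
  from gen_binomial_complex[OF this, of "-2/3"]
  have "(\<lambda>n. ((-2/3) gchoose n) * (-z)^n) sums (1 + -z) powr (-2/3)" .
  moreover have "((-2/3::complex) gchoose n) * (-z)^n = of_real (cc n) * z^n" for n
  proof -
    have "((-2/3::complex) gchoose n) = (-1)^n * pochhammer (2/3) n / fact n"
      unfolding gbinomial_pochhammer by simp
    also have "pochhammer (2/3::complex) n = of_real (pochhammer (2/3) n)"
      by (simp add: pochhammer_of_real[symmetric])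
    finally show ?thesis unfolding cc_def by (simp add: power_minus' algebra_simps)
  qed
  ultimately show ?thesis by simp
qed

lemma aa_alt: "aa n = cc n / (3 * real n + 1)"
  unfolding aa_def by (simp add: algebra_simps)

lemma aa_eq3: "cc n * (3 * (1 / (3 * real n + 1))) = 3 * aa n"
  unfolding aa_alt by (simp add: field_simps)

lemma int_powr_n:
  "((\<lambda>u. u powr (real n - 2/3)) has_integral (3 * (1 / (3 * real n + 1)))) {0<..<1::real}"
proof -
  have "real n - 2/3 > -1" by simp
  from has_integral_powr_from_0[OF this, of 1]
  have "((\<lambda>u. u powr (real n - 2/3)) has_integral (1 / (real n - 2/3 + 1))) {0..1}" by simp
  moreover have "1 / (real n - 2/3 + 1) = 3 * (1 / (3 * real n + 1))" by (simp add: field_simps)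
  ultimately show ?thesis by (simp add: has_integral_Icc_iff_Ioo)
qed

lemma aa_sums: "aa sums (Beta (1/3) (1/3) / 3)"
proof -
  define S where "S = {0<..<1::real}"
  define f where "f k u = (\<Sum>n<k. cc n * u^n) * u powr (-2/3)" for k u
  define g where "g u = u powr (-2/3) * (1-u) powr (-2/3)" for u :: real
  have gint: "(g has_integral Beta (1/3) (1/3)) S"
    using has_integral_Beta_real[of "1/3" "1/3"] unfolding S_def g_def
    by (simp add: has_integral_Icc_iff_Ioo)
  have fint: "(f k has_integral (\<Sum>n<k. 3 * aa n)) S" for k
  proof -
    have i1: "((\<lambda>u. cc n * u powr (real n - 2/3)) has_integral (3 * aa n)) S" for n
      unfolding S_def aa_eq3[symmetric] by (rule has_integral_mult_right[OF int_powr_n])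
    have i2: "((\<lambda>u. \<Sum>n<k. cc n * u powr (real n - 2/3)) has_integral (\<Sum>n<k. 3 * aa n)) S"
      by (rule has_integral_sum[OF finite_lessThan i1])
    have eq: "(\<Sum>n<k. cc n * u powr (real n - 2/3)) = f k u" if "u \<in> S" for u
    proof -
      have u: "u > 0" using that by (simp add: S_def)
      have "u powr (real n - 2/3) = u^n * u powr (-2/3)" for n
      proof -
        have "u powr (real n - 2/3) = u powr (real n + (-2/3))" by simp
        also have "\<dots> = u powr (real n) * u powr (-2/3)" by (rule powr_add)
        also have "u powr (real n) = u^n" using u by (rule powr_realpow)
        finally show ?thesis .
      qed
      then have "(\<Sum>n<k. cc n * u powr (real n - 2/3)) = (\<Sum>n<k. cc n * u^n * u powr (-2/3))"
        by (simp only: mult.assoc)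
      also have "\<dots> = f k u" unfolding f_def by (rule sum_distrib_right[symmetric])
      finally show ?thesis .
    qed
    show ?thesis by (rule has_integral_eq[OF eq i2])
  qed
  have fintg: "f k integrable_on S" for k using fint[of k] by (rule has_integral_integrable)
  have gintg: "g integrable_on S" using gint by (rule has_integral_integrable)
  have lim: "(\<lambda>k. f k u) \<longlonglongrightarrow> g u" if "u \<in> S" for u
  proof -
    have "\<bar>u\<bar> < 1" using that by (simp add: S_def)
    from cc_binom_real[OF this]
    have "(\<lambda>k. \<Sum>n<k. cc n * u^n) \<longlonglongrightarrow> (1-u) powr (-2/3)" by (simp add: sums_def)
    then have "(\<lambda>k. (\<Sum>n<k. cc n * u^n) * u powr (-2/3)) \<longlonglongrightarrow> (1-u) powr (-2/3) * u powr (-2/3)"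
      by (intro tendsto_intros)
    then show ?thesis unfolding f_def g_def by (simp add: mult.commute)
  qed
  have mono: "f k u \<le> f (Suc k) u" if "u \<in> S" for k u
    unfolding f_def using that cc_nonneg[of k]
    by (intro mult_right_mono) (auto simp: S_def)
  have fle: "f k u \<le> g u" if "u \<in> S" for k u
  proof -
    have "\<bar>u\<bar> < 1" using that by (simp add: S_def)
    from cc_binom_real[OF this] have sm: "summable (\<lambda>n. cc n * u^n)" "(\<Sum>n. cc n * u^n) = (1-u) powr (-2/3)"
      by (auto simp: sums_iff)
    have "(\<Sum>n<k. cc n * u^n) \<le> (\<Sum>n. cc n * u^n)"
      by (rule sum_le_suminf[OF sm(1)]) (use that in \<open>auto simp: S_def intro!: mult_nonneg_nonneg cc_nonneg\<close>)
    then have "(\<Sum>n<k. cc n * u^n) \<le> (1-u) powr (-2/3)" using sm(2) by simp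
    then have "(\<Sum>n<k. cc n * u^n) * u powr (-2/3) \<le> (1-u) powr (-2/3) * u powr (-2/3)"
      by (rule mult_right_mono) simp
    then show ?thesis unfolding f_def g_def by (simp only: mult.commute)
  qed
  have bnd: "bounded (range (\<lambda>k. integral S (f k)))"
  proof -
    have "\<bar>integral S (f k)\<bar> \<le> Beta (1/3) (1/3)" for k
    proof -
      have "integral S (f k) \<le> integral S g"
        by (rule integral_le[OF fintg gintg fle])
      moreover have "integral S (f k) \<ge> 0"
        using integral_unique[OF fint[of k]] by (simp add: aa_nonneg sum_nonneg)
      ultimately show ?thesis using integral_unique[OF gint] by simp
    qed
    then show ?thesis by (auto simp: bounded_iff)
  qed
  have "(\<lambda>k. integral S (f k)) \<longlonglongrightarrow> integral S g"
    using monotone_convergence_increasing[OF fintg mono lim bnd] by (rule conjunct2)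
  then have "(\<lambda>k. (\<Sum>n<k. 3 * aa n)) \<longlonglongrightarrow> Beta (1/3) (1/3)"
    using integral_unique[OF fint] integral_unique[OF gint] by simp
  then have "(\<lambda>k. (1/3) * (\<Sum>n<k. 3 * aa n)) \<longlonglongrightarrow> (1/3) * Beta (1/3) (1/3)"
    by (intro tendsto_intros)
  then show ?thesis by (simp add: sums_def sum_distrib_left[symmetric])
qed

definition II :: real where "II = Beta (1/3) (1/3) / 3"

lemma aa_summable: "summable aa" using aa_sums by (auto simp: sums_iff)
lemma aa_suminf: "suminf aa = II" using aa_sums by (simp add: sums_iff II_def)

lemma aa0: "aa 0 = 1" by (simp add: aa_def cc_def)

lemma II_pos: "II > 0"
proof -
  have "aa 0 \<le> suminf aa"
    using aa_summable aa_nonneg by (intro sum_le_suminf[where I="{0}", simplified]) auto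
  then show ?thesis using aa0 aa_suminf by simp
qed

lemma partial_le: "(\<Sum>n<N. aa n) \<le> II"
  using aa_summable aa_nonneg aa_suminf by (metis sum_le_suminf finite_lessThan)

definition PP :: "complex \<Rightarrow> complex" where "PP q = (\<Sum>n. of_real (aa n) * q^n)"
definition PN :: "nat \<Rightarrow> complex \<Rightarrow> complex" where "PN N q = (\<Sum>n<N. of_real (aa n) * q^n)"

lemma term_norm: "norm (q::complex) \<le> 1 \<Longrightarrow> norm (of_real (aa n) * q^n) \<le> aa n"
  using aa_nonneg[of n] by (simp add: norm_mult norm_power mult_left_le power_le_one abs_of_nonneg)

lemma PP_summable: "norm (q::complex) \<le> 1 \<Longrightarrow> summable (\<lambda>n. of_real (aa n) * q^n)"
  by (rule summable_comparison_test[OF _ aa_summable]) (use term_norm in auto)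

lemma PP_bound: "norm q \<le> 1 \<Longrightarrow> norm (PP q) \<le> II"
  unfolding PP_def aa_suminf[symmetric] by (rule norm_suminf_le) (use term_norm aa_summable in auto)

lemma PN_bound: "norm q \<le> 1 \<Longrightarrow> norm (PN N q) \<le> II"
proof -
  assume q: "norm q \<le> 1"
  have "norm (PN N q) \<le> (\<Sum>n<N. norm (of_real (aa n) * q^n))"
    unfolding PN_def by (rule norm_sum)
  also have "\<dots> \<le> (\<Sum>n<N. aa n)" by (intro sum_mono term_norm q)
  also have "\<dots> \<le> II" by (rule partial_le)
  finally show ?thesis .
qed

lemma PP_PN: "norm q \<le> 1 \<Longrightarrow> norm (PP q - PN N q) \<le> II - (\<Sum>n<N. aa n)"
proof -
  assume q: "norm q \<le> 1"
  have "PP q = (\<Sum>n. of_real (aa (n+N)) * q^(n+N)) + PN N q"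
    unfolding PP_def PN_def by (rule suminf_split_initial_segment[OF PP_summable[OF q]])
  then have "PP q - PN N q = (\<Sum>n. of_real (aa (n+N)) * q^(n+N))" by simp
  also have "norm \<dots> \<le> (\<Sum>n. aa (n+N))"
    by (rule norm_suminf_le) (use term_norm q aa_summable in \<open>auto simp: summable_iff_shift\<close>)
  also have "\<dots> = II - (\<Sum>n<N. aa n)"
    using suminf_split_initial_segment[OF aa_summable, of N] aa_suminf by simp
  finally show ?thesis .
qed

lemma PP_cont: "continuous_on (cball 0 1) PP"
proof -
  have "uniform_limit (cball 0 1) (\<lambda>n (q::complex). \<Sum>i<n. of_real (aa i) * q^i) (\<lambda>q. \<Sum>i. of_real (aa i) * q^i) sequentially"
    by (rule Weierstrass_m_test[OF _ aa_summable]) (auto intro: term_norm)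
  then show ?thesis unfolding PP_def
    by (rule uniform_limit_theorem[rotated]) (auto intro!: always_eventually continuous_intros)
qed


lemma cis_ne1: "cos x \<noteq> 1 \<Longrightarrow> cis x \<noteq> 1"
proof
  assume "cos x \<noteq> 1" "cis x = 1"
  have "cos x = Re (cis x)" by simp
  also have "\<dots> = 1" using \<open>cis x = 1\<close> by simp
  finally show False using \<open>cos x \<noteq> 1\<close> by simp
qed

lemma rootsum:
  fixes k :: int
  assumes "k \<noteq> 0" "\<bar>k\<bar> < int M"
  shows "(\<Sum>j<M. cis (2*pi*real j*real_of_int k/M)) = 0"
proof -
  define w where "w = cis (2*pi*real_of_int k/M)"
  have M: "M > 0" using assms by simp
  have eq: "cis (2*pi*real j*real_of_int k/M) = w ^ j" for j
  proof -
    have "w ^ j = cis (real j * (2*pi*real_of_int k/M))" by (simp only: w_def Complex.DeMoivre)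
    also have "real j * (2*pi*real_of_int k/M) = 2*pi*real j*real_of_int k/M" by simp
    finally show ?thesis by simp
  qed
  have "cos (2*pi*real_of_int k/M) \<noteq> 1"
  proof
    assume "cos (2*pi*real_of_int k/M) = 1"
    then obtain n :: int where n: "2*pi*real_of_int k/M = real_of_int n * 2 * pi" using cos_one_2pi_int by blast
    then have "real_of_int k = real_of_int n * real M" using M by (simp add: field_simps)
    then have "k = n * int M" by (metis of_int_eq_iff of_int_mult of_int_of_nat_eq)
    with assms show False by (cases "n = 0") (auto simp: abs_mult)
  qed
  then have "w \<noteq> 1" unfolding w_def by (rule cis_ne1)
  moreover have "w ^ M = 1" unfolding w_def Complex.DeMoivre
  proof -
    have "real M * (2*pi*real_of_int k/real M) = 2*pi*real_of_int k" using M by simp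
    moreover have "cis (2*pi*real_of_int k) = 1" by (rule cis_multiple_2pi) simp
    ultimately show "cis (real M * (2*pi*real_of_int k/real M)) = 1" by simp
  qed
  ultimately show ?thesis unfolding eq by (simp add: geometric_sum)
qed


lemma rootsum_gen:
  fixes k :: int
  assumes "\<bar>k\<bar> < int M"
  shows "(\<Sum>j<M. cis (2*pi*real j*real_of_int k/M)) = (if k = 0 then of_nat M else 0)"
  using rootsum[OF _ assms] by auto

definition qq :: "nat \<Rightarrow> nat \<Rightarrow> complex" where "qq M j = cis (2*pi*real j/real M)"

lemma qq_pow: "qq M j ^ p = cis (2*pi*real j*real_of_int (int p)/M)"
proof -
  have "qq M j ^ p = cis (real p * (2*pi*real j/real M))" unfolding qq_def by (rule Complex.DeMoivre)
  also have "real p * (2*pi*real j/real M) = 2*pi*real j*real_of_int (int p)/M" by simp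
  finally show ?thesis .
qed

lemma qq_powcnj: "qq M j ^ m * cnj (qq M j) ^ n = cis (2*pi*real j*real_of_int (int m - int n)/M)"
proof -
  have "qq M j ^ m * cnj (qq M j) ^ n = cis (real m * (2*pi*real j/real M)) * cis (real n * (-(2*pi*real j/real M)))"
    unfolding qq_def cis_cnj Complex.DeMoivre ..
  also have "\<dots> = cis (real m * (2*pi*real j/real M) + real n * (-(2*pi*real j/real M)))"
    by (rule cis_mult)
  also have "real m * (2*pi*real j/real M) + real n * (-(2*pi*real j/real M)) = 2*pi*real j*real_of_int (int m - int n)/M"
    by (cases "M = 0") (simp_all add: field_simps)
  finally show ?thesis .
qed

lemma qq_sum_pow: "0 < p \<Longrightarrow> p < M \<Longrightarrow> (\<Sum>j<M. qq M j ^ p) = 0"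
  unfolding qq_pow using rootsum_gen[of "int p" M] by simp

lemma qq_sum_powcnj: "m < M \<Longrightarrow> n < M \<Longrightarrow>
   (\<Sum>j<M. qq M j ^ m * cnj (qq M j) ^ n) = (if m = n then of_nat M else 0)"
  unfolding qq_powcnj using rootsum_gen[of "int m - int n" M] by auto

lemma PN_sq: "of_real ((norm (PN N q))^2) = (\<Sum>m<N. \<Sum>n<N. of_real (aa m * aa n) * (q ^ m * cnj q ^ n))"
proof -
  have "of_real ((norm (PN N q))^2) = PN N q * cnj (PN N q)" by (rule complex_norm_square)
  also have "cnj (PN N q) = (\<Sum>n<N. of_real (aa n) * cnj q ^ n)" unfolding PN_def by simp
  also have "PN N q * \<dots> = (\<Sum>m<N. \<Sum>n<N. (of_real (aa m) * q ^ m) * (of_real (aa n) * cnj q ^ n))"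
    unfolding PN_def by (rule sum_product)
  also have "\<dots> = (\<Sum>m<N. \<Sum>n<N. of_real (aa m * aa n) * (q ^ m * cnj q ^ n))"
    by (simp add: mult_ac)
  finally show ?thesis .
qed

lemma avg_sq:
  assumes "N \<le> M"
  shows "(\<Sum>j<M. (norm (PN N (qq M j)))^2) = real M * (\<Sum>n<N. (aa n)^2)"
proof -
  have "of_real (\<Sum>j<M. (norm (PN N (qq M j)))^2) = (\<Sum>j<M. \<Sum>m<N. \<Sum>n<N. of_real (aa m * aa n) * (qq M j ^ m * cnj (qq M j) ^ n))"
    by (simp only: of_real_sum PN_sq)
  also have "\<dots> = (\<Sum>m<N. \<Sum>n<N. of_real (aa m * aa n) * (\<Sum>j<M. qq M j ^ m * cnj (qq M j) ^ n))"
    by (simp add: sum_distrib_left sum.swap[of _ "{..<M}"])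
  also have "\<dots> = (\<Sum>m<N. \<Sum>n<N. of_real (aa m * aa n) * (if m = n then of_nat M else 0))"
    using assms by (intro sum.cong refl) (simp add: qq_sum_powcnj)
  also have "\<dots> = (\<Sum>m<N. of_real (aa m * aa m) * of_nat M)"
  proof (intro sum.cong refl)
    fix m assume m: "m \<in> {..<N}"
    have "(\<Sum>n<N. of_real (aa m * aa n) * (if m = n then of_nat M else 0)) =
          (\<Sum>n<N. (if m = n then of_real (aa m * aa m) * of_nat M else (0::complex)))"
      by (intro sum.cong refl) auto
    also have "\<dots> = of_real (aa m * aa m) * of_nat M" using m by (simp add: sum.delta)
    finally show "(\<Sum>n<N. of_real (aa m * aa n) * (if m = n then of_nat M else 0)) = of_real (aa m * aa m) * (of_nat M :: complex)" .
  qed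
  also have "\<dots> = of_real (real M * (\<Sum>n<N. (aa n)^2))"
    by (simp add: sum_distrib_left power2_eq_square mult_ac)
  finally show ?thesis by (simp only: of_real_eq_iff)
qed

lemma PN_cube: "q * PN N q ^ 3 = (\<Sum>l<N. \<Sum>m<N. \<Sum>n<N. of_real (aa l * aa m * aa n) * q ^ (l+m+n+1))"
proof -
  have "PN N q ^ 3 = PN N q * (PN N q * PN N q)" by (simp add: power3_eq_cube)
  also have "\<dots> = (\<Sum>l<N. \<Sum>m<N. \<Sum>n<N. (of_real (aa l) * q^l) * ((of_real (aa m) * q^m) * (of_real (aa n) * q^n)))"
    unfolding PN_def sum_product by (simp add: sum_distrib_left)
  finally have "q * PN N q ^ 3 = q * (\<Sum>l<N. \<Sum>m<N. \<Sum>n<N. (of_real (aa l) * q^l) * ((of_real (aa m) * q^m) * (of_real (aa n) * q^n)))" by simp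
  also have "\<dots> = (\<Sum>l<N. \<Sum>m<N. \<Sum>n<N. of_real (aa l * aa m * aa n) * q ^ (l+m+n+1))"
    by (simp add: sum_distrib_left power_add mult_ac)
  finally show ?thesis .
qed

lemma avg_cube:
  assumes "3 * N \<le> M"
  shows "(\<Sum>j<M. qq M j * PN N (qq M j) ^ 3) = 0"
proof -
  have "(\<Sum>j<M. qq M j * PN N (qq M j) ^ 3) = (\<Sum>l<N. \<Sum>m<N. \<Sum>n<N. of_real (aa l * aa m * aa n) * (\<Sum>j<M. qq M j ^ (l+m+n+1)))"
    unfolding PN_cube by (simp add: sum_distrib_left sum.swap[of _ "{..<M}"])
  also have "\<dots> = 0"
  proof (intro sum.neutral ballI)
    fix l m n assume "l \<in> {..<N}" "m \<in> {..<N}" "n \<in> {..<N}"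
    then have "(\<Sum>j<M. qq M j ^ (l+m+n+1)) = 0" using assms by (intro qq_sum_pow) auto
    then show "of_real (aa l * aa m * aa n) * (\<Sum>j<M. qq M j ^ (l+m+n+1)) = 0" by (simp only: mult_zero_right)
  qed
  finally show ?thesis .
qed



definition FF :: "real \<Rightarrow> complex" where "FF \<theta> = cis \<theta> * PP (cis (3*\<theta>))"
definition DD :: "real \<Rightarrow> complex" where "DD \<theta> = \<i> * cis \<theta> * (1 - cis (3*\<theta>)) powr (-2/3)"



definition ww :: "real \<Rightarrow> real \<Rightarrow> complex" where "ww \<theta> s = 1 - cis (3*\<theta>) * of_real (s^3)"
definition fI :: "real \<Rightarrow> real \<Rightarrow> complex" where "fI \<theta> s = cis \<theta> * ww \<theta> s powr (-2/3)"
definition RR :: "real \<Rightarrow> real \<Rightarrow> complex" where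
  "RR \<theta> \<rho> = (\<Sum>n. of_real (aa n) * cis (3*\<theta>) ^ n * of_real (\<rho>^(3*n+1)))"

lemma int_pow:
  assumes "0 \<le> \<rho>"
  shows "((\<lambda>s::real. s^k) has_integral (\<rho>^(k+1)/real (k+1))) {0..\<rho>}"
proof -
  have "((\<lambda>s::real. s^k) has_integral (\<rho>^(k+1)/(k+1) - 0^(k+1)/(k+1))) {0..\<rho>}"
  proof (rule fundamental_theorem_of_calculus[OF assms])
    fix x :: real assume "x \<in> {0..\<rho>}"
    have "((\<lambda>s::real. s^(k+1)) has_real_derivative (real (k+1) * x^(k+1 - Suc 0))) (at x within {0..\<rho>})"
      by (rule DERIV_pow)
    then have "((\<lambda>s::real. s^(k+1)/(k+1)) has_real_derivative (real (k+1) * x^(k+1 - Suc 0) / (k+1))) (at x within {0..\<rho>})"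
      by (rule DERIV_cdivide)
    then show "((\<lambda>s::real. s^(k+1)/(k+1)) has_vector_derivative x^k) (at x within {0..\<rho>})"
      by (simp add: has_real_derivative_iff_has_vector_derivative del: of_nat_Suc)
  qed
  then show ?thesis by (simp add: algebra_simps)
qed

lemma fI_int_partial:
  assumes "0 \<le> \<rho>" "\<rho> < 1"
  shows "((\<lambda>s. ww \<theta> s powr (-2/3)) has_integral RR \<theta> \<rho>) {0..\<rho>}"
proof -
  define q where "q = cis (3*\<theta>)"
  define ft where "ft n s = of_real (cc n) * (q * of_real (s^3))^n" for n s
  have nq: "norm q = 1" by (simp add: q_def)
  have sums_s: "(\<lambda>n. ft n s) sums (ww \<theta> s powr (-2/3))" if "s \<in> {0..\<rho>}" for s
  proof -
    have "norm (q * of_real (s^3)) < 1"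
    proof -
      have "norm (q * of_real (s^3)) = s^3" using that nq by (simp add: norm_mult norm_power abs_of_nonneg)
      also have "s^3 \<le> \<rho>^3" using that by (intro power_mono) auto
      also have "\<rho>^3 < 1" using assms by (simp add: power_less_one_iff)
      finally show ?thesis .
    qed
    from cc_binom_complex[OF this] show ?thesis unfolding ft_def ww_def q_def .
  qed
  have ul: "uniform_limit {0..\<rho>} (\<lambda>N s. \<Sum>n<N. ft n s) (\<lambda>s. \<Sum>n. ft n s) sequentially"
  proof (rule Weierstrass_m_test)
    show "summable (\<lambda>n. (\<rho>^3)^n)" using assms by (intro summable_geometric) (simp add: power_less_one_iff)
    fix n s assume s: "s \<in> {0..\<rho>}"
    have "norm (ft n s) = cc n * (s^3)^n" using s nq cc_nonneg[of n]
      by (simp add: ft_def norm_mult norm_power)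
    also have "\<dots> \<le> 1 * (\<rho>^3)^n"
      using s cc_le1[of n] by (intro mult_mono power_mono) auto
    finally show "norm (ft n s) \<le> (\<rho>^3)^n" by simp
  qed
  obtain I J where I: "\<And>N. ((\<lambda>s. \<Sum>n<N. ft n s) has_integral I N) {0..\<rho>}"
    and J: "((\<lambda>s. \<Sum>n. ft n s) has_integral J) {0..\<rho>}" and IJ: "I \<longlonglongrightarrow> J"
    by (rule uniform_limit_integral[OF ul]) (auto simp: ft_def intro!: continuous_intros)
  define b where "b n = of_real (aa n) * q ^ n * of_real (\<rho>^(3*n+1))" for n
  have ftint: "(ft n has_integral b n) {0..\<rho>}" for n
  proof -
    have pc: "(x^n)^3 = (x^3)^n" for x :: complex by (metis power_mult mult.commute)
    have e1: "(of_real (cc n) * q^n) * of_real (s^(3*n)) = ft n s" if "s \<in> {0..\<rho>}" for s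
      by (simp add: ft_def power_mult_distrib power_mult mult_ac pc)
    have e2: "(of_real (cc n) * q^n) * of_real (\<rho>^(3*n+1)/real (3*n+1)) = b n"
      by (simp add: b_def aa_alt mult_ac add.commute)
    have "((\<lambda>s. of_real (s^(3*n)) :: complex) has_integral of_real (\<rho>^(3*n+1)/real (3*n+1))) {0..\<rho>}"
      by (rule has_integral_of_real[OF int_pow[OF assms(1)]])
    then have "((\<lambda>s. (of_real (cc n) * q^n) * of_real (s^(3*n))) has_integral
               (of_real (cc n) * q^n) * of_real (\<rho>^(3*n+1)/real (3*n+1))) {0..\<rho>}"
      by (rule has_integral_mult_right)
    then have "(ft n has_integral (of_real (cc n) * q^n) * of_real (\<rho>^(3*n+1)/real (3*n+1))) {0..\<rho>}"
      by (rule has_integral_eq[OF e1, rotated])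
    then show ?thesis unfolding e2 .
  qed
  have "I N = (\<Sum>n<N. b n)" for N
    using has_integral_unique[OF I[of N] has_integral_sum[OF finite_lessThan ftint]] by simp
  then have IE: "I = (\<lambda>N. \<Sum>n<N. b n)" by (intro ext)
  have "b sums J" using IJ unfolding IE sums_def .
  then have "J = RR \<theta> \<rho>" unfolding RR_def b_def q_def by (simp add: sums_iff)
  moreover have "((\<lambda>s. ww \<theta> s powr (-2/3)) has_integral J) {0..\<rho>}"
    by (rule has_integral_eq[OF _ J]) (use sums_s in \<open>simp add: sums_iff\<close>)
  ultimately show ?thesis by simp
qed


lemma cos_lt1: "0 < x \<Longrightarrow> x < 2*pi \<Longrightarrow> cos x < 1"
proof -
  assume x: "0 < x" "x < 2*pi"
  have "cos x \<noteq> 1"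
  proof
    assume "cos x = 1"
    then obtain n :: int where n: "x = real_of_int n * 2 * pi" using cos_one_2pi_int by blast
    have a: "0 < real_of_int n * (2*pi)" and b: "real_of_int n * (2*pi) < 1 * (2*pi)"
      using x n by (simp_all add: mult.assoc)
    have "0 < real_of_int n" using a pi_gt_zero by (simp add: zero_less_mult_iff)
    moreover have "real_of_int n < 1" using b pi_gt_zero by (simp only: mult_less_cancel_right)
    ultimately have "0 < n" "n < 1" by simp_all
    then show False by simp
  qed
  then show ?thesis using cos_le_one[of x] by linarith
qed

lemma ww_Re_pos:
  assumes "0 < \<theta>" "\<theta> < 2*pi/3" "0 \<le> s" "s \<le> 1"
  shows "Re (ww \<theta> s) > 0"
proof -
  have c: "cos (3*\<theta>) < 1" using assms by (intro cos_lt1) auto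
  have s3: "0 \<le> s^3" "s^3 \<le> 1" using assms by (auto simp: power_le_one)
  have "cos (3*\<theta>) * s^3 < 1"
  proof (cases "cos (3*\<theta>) \<ge> 0")
    case True
    then have "cos (3*\<theta>) * s^3 \<le> cos (3*\<theta>) * 1" using s3 by (intro mult_left_mono) auto
    then show ?thesis using c by simp
  next
    case False
    then have "cos (3*\<theta>) * s^3 \<le> 0" using s3 by (simp add: mult_nonpos_nonneg)
    then show ?thesis by simp
  qed
  moreover have "Re (ww \<theta> s) = 1 - cos (3*\<theta>) * s^3" by (simp add: ww_def)
  ultimately show ?thesis by simp
qed

lemma ww_cont: "continuous_on A (\<lambda>s. ww \<theta> s)"
  unfolding ww_def by (intro continuous_intros)

lemma fI_cont:
  assumes "0 < \<theta>" "\<theta> < 2*pi/3"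
  shows "continuous_on {0..1} (fI \<theta>)"
proof -
  have "continuous_on {0..1} (\<lambda>s. ww \<theta> s powr (-2/3))"
  proof (rule continuous_on_powr_complex)
    show "{0..1} \<subseteq> {s. 0 \<le> Re (ww \<theta> s) \<or> Im (ww \<theta> s) \<noteq> 0}"
      using ww_Re_pos[OF assms] by (auto intro: less_imp_le)
    show "\<And>s. s \<in> {0..1} \<Longrightarrow> ww \<theta> s = 0 \<Longrightarrow> 0 < Re (-2/3 :: complex)"
      using ww_Re_pos[OF assms] by fastforce
  qed (auto intro: ww_cont continuous_intros)
  then show ?thesis unfolding fI_def[abs_def] by (rule continuous_on_mult[OF continuous_on_const])
qed

lemma RR_cont: "continuous_on {0..1} (RR \<theta>)"
proof -
  have "uniform_limit {0..1} (\<lambda>N \<rho>. \<Sum>n<N. of_real (aa n) * cis (3*\<theta>) ^ n * of_real (\<rho>^(3*n+1)))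
          (\<lambda>\<rho>. \<Sum>n. of_real (aa n) * cis (3*\<theta>) ^ n * of_real (\<rho>^(3*n+1))) sequentially"
  proof (rule Weierstrass_m_test[OF _ aa_summable])
    fix n and \<rho> :: real assume r: "\<rho> \<in> {0..1}"
    have "norm (of_real (aa n) * cis (3*\<theta>) ^ n * of_real (\<rho>^(3*n+1)) :: complex) = aa n * \<rho>^(3*n+1)"
      using r aa_nonneg[of n] by (simp add: norm_mult norm_power abs_of_nonneg)
    also have "\<dots> \<le> aa n * 1" using r aa_nonneg[of n] by (intro mult_left_mono power_le_one) auto
    finally show "norm (of_real (aa n) * cis (3*\<theta>) ^ n * of_real (\<rho>^(3*n+1)) :: complex) \<le> aa n" by simp
  qed
  then show ?thesis unfolding RR_def
    by (rule uniform_limit_theorem[rotated]) (auto intro!: always_eventually continuous_intros)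
qed

lemma RR_one: "RR \<theta> 1 = PP (cis (3*\<theta>))"
  by (simp add: RR_def PP_def)

lemma FF_integral:
  assumes "0 < \<theta>" "\<theta> < 2*pi/3"
  shows "integral {0..1} (fI \<theta>) = FF \<theta>"
proof -
  define H where "H \<rho> = integral {0..\<rho>} (fI \<theta>) - cis \<theta> * RR \<theta> \<rho>" for \<rho>
  have fint: "fI \<theta> integrable_on {0..1}"
    by (rule integrable_continuous_interval[OF fI_cont[OF assms]])
  have Hc: "continuous_on {0..1} H" unfolding H_def
    by (intro continuous_intros indefinite_integral_continuous_1 fint RR_cont)
  have H0: "H \<rho> = 0" if "0 \<le> \<rho>" "\<rho> < 1" for \<rho>
  proof -
    have "((\<lambda>s. cis \<theta> * ww \<theta> s powr (-2/3)) has_integral cis \<theta> * RR \<theta> \<rho>) {0..\<rho>}"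
      by (rule has_integral_mult_right[OF fI_int_partial[OF that]])
    then have "integral {0..\<rho>} (fI \<theta>) = cis \<theta> * RR \<theta> \<rho>"
      unfolding fI_def[abs_def] by (rule integral_unique)
    then show ?thesis by (simp add: H_def)
  qed
  have "(H \<longlongrightarrow> H 1) (at 1 within {0..1})"
    using Hc by (simp add: continuous_on_def)
  then have t1: "(H \<longlongrightarrow> H 1) (at_left 1)"
    by (simp add: at_within_Icc_at_left)
  have ev: "eventually (\<lambda>x. x \<in> {0<..<1}) (at_left (1::real))"
    by (rule eventually_at_left_real) simp
  have "eventually (\<lambda>x. H x = 0) (at_left (1::real))"
    using ev by (rule eventually_mono) (auto intro: H0)
  then have t2: "(H \<longlongrightarrow> 0) (at_left 1)" by (rule tendsto_eventually)
  have "H 1 = 0" using tendsto_unique[OF _ t1 t2] by simp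
  then show ?thesis by (simp add: H_def RR_one FF_def)
qed


definition fx :: "real \<Rightarrow> real \<Rightarrow> complex" where
  "fx \<theta> s = \<i> * cis \<theta> * ww \<theta> s powr (-2/3)
     + cis \<theta> * ((-2/3) * ww \<theta> s powr (-2/3 - 1) * (-(3 * \<i> * cis (3*\<theta>) * of_real (s^3))))"

lemma Re_pos_nonpos: "Re z > 0 \<Longrightarrow> z \<notin> \<real>\<^sub>\<le>\<^sub>0"
  by (auto simp: complex_nonpos_Reals_iff)

lemma fI_dtheta:
  assumes "Re (ww \<theta> s) > 0"
  shows "((\<lambda>x. fI x s) has_vector_derivative fx \<theta> s) (at \<theta> within U)"
proof -
  define c where "c = (of_real (s^3) :: complex)"
  define g where "g z = exp (\<i>*z) * (1 - exp (\<i>*(3*z)) * c) powr (-2/3)" for z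
  define z0 where "z0 = (of_real \<theta> :: complex)"
  have w0: "1 - exp (\<i>*(3*z0)) * c = ww \<theta> s"
  proof -
    have "exp (\<i>*(3*z0)) = cis (3*\<theta>)" unfolding cis_conv_exp z0_def by simp
    then show ?thesis by (simp add: ww_def c_def)
  qed
  have e0: "exp (\<i>*z0) = cis \<theta>" unfolding cis_conv_exp z0_def by simp
  have e3: "exp (\<i>*(3*z0)) = cis (3*\<theta>)" unfolding cis_conv_exp z0_def by simp
  have np: "1 - exp (\<i>*(3*z0)) * c \<notin> \<real>\<^sub>\<le>\<^sub>0" unfolding w0 by (rule Re_pos_nonpos[OF assms])
  have d1: "((\<lambda>z. exp (\<i>*z)) has_field_derivative exp (\<i>*z0) * \<i>) (at z0)"
    by (auto intro!: derivative_eq_intros)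
  have d2: "((\<lambda>z. 1 - exp (\<i>*(3*z)) * c) has_field_derivative -(exp (\<i>*(3*z0)) * (\<i>*3) * c)) (at z0)"
    by (auto intro!: derivative_eq_intros)
  have d3: "((\<lambda>z. (1 - exp (\<i>*(3*z)) * c) powr (-2/3)) has_field_derivative
      ((-2/3) * (1 - exp (\<i>*(3*z0)) * c) powr (-2/3 - 1)) * (-(exp (\<i>*(3*z0)) * (\<i>*3) * c))) (at z0)"
    by (rule DERIV_chain2[OF has_field_derivative_powr[OF np] d2])
  have d4: "(g has_field_derivative
      (exp (\<i>*z0) * \<i>) * (1 - exp (\<i>*(3*z0)) * c) powr (-2/3)
      + ((-2/3) * (1 - exp (\<i>*(3*z0)) * c) powr (-2/3 - 1)) * (-(exp (\<i>*(3*z0)) * (\<i>*3) * c)) * exp (\<i>*z0)) (at z0)"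
    unfolding g_def by (rule DERIV_mult[OF d1 d3])
  have D: "(exp (\<i>*z0) * \<i>) * (1 - exp (\<i>*(3*z0)) * c) powr (-2/3)
      + ((-2/3) * (1 - exp (\<i>*(3*z0)) * c) powr (-2/3 - 1)) * (-(exp (\<i>*(3*z0)) * (\<i>*3) * c)) * exp (\<i>*z0)
      = fx \<theta> s"
    unfolding e0 e3 fx_def c_def by (simp add: ww_def algebra_simps)
  have "((\<lambda>x. g (of_real x)) has_vector_derivative fx \<theta> s) (at \<theta> within U)"
    by (rule has_vector_derivative_real_field) (use d4 D in \<open>simp add: z0_def\<close>)
  moreover have "g (of_real x) = fI x s" for x
  proof -
    have "exp (\<i>*(3* of_real x)) = cis (3*x)" unfolding cis_conv_exp by simp
    moreover have "exp (\<i>* of_real x) = cis x" unfolding cis_conv_exp by simp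
    ultimately show ?thesis by (simp add: g_def fI_def ww_def c_def)
  qed
  ultimately show ?thesis by simp
qed

definition GG :: "real \<Rightarrow> real \<Rightarrow> complex" where
  "GG \<theta> s = \<i> * cis \<theta> * of_real s * ww \<theta> s powr (-2/3)"

lemma GG_ds:
  assumes "Re (ww \<theta> s) > 0"
  shows "((\<lambda>x. GG \<theta> x) has_vector_derivative fx \<theta> s) (at s within U)"
proof -
  define q where "q = cis (3*\<theta>)"
  define g where "g z = \<i> * cis \<theta> * z * (1 - q * z^3) powr (-2/3)" for z :: complex
  define z0 where "z0 = (of_real s :: complex)"
  have w0: "1 - q * z0^3 = ww \<theta> s" by (simp add: ww_def q_def z0_def)
  have np: "1 - q * z0^3 \<notin> \<real>\<^sub>\<le>\<^sub>0" unfolding w0 by (rule Re_pos_nonpos[OF assms])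
  have d1: "((\<lambda>z. \<i> * cis \<theta> * z) has_field_derivative \<i> * cis \<theta>) (at z0)"
    by (auto intro!: derivative_eq_intros)
  have d2: "((\<lambda>z. 1 - q * z^3) has_field_derivative -(q * (3 * z0^2))) (at z0)"
    by (auto intro!: derivative_eq_intros simp: power2_eq_square)
  have d3: "((\<lambda>z. (1 - q * z^3) powr (-2/3)) has_field_derivative
      ((-2/3) * (1 - q * z0^3) powr (-2/3 - 1)) * (-(q * (3 * z0^2)))) (at z0)"
    by (rule DERIV_chain2[OF has_field_derivative_powr[OF np] d2])
  have d4: "(g has_field_derivative
      (\<i> * cis \<theta>) * (1 - q * z0^3) powr (-2/3)
      + ((-2/3) * (1 - q * z0^3) powr (-2/3 - 1)) * (-(q * (3 * z0^2))) * (\<i> * cis \<theta> * z0)) (at z0)"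
    unfolding g_def by (rule DERIV_mult[OF d1 d3])
  have D: "(\<i> * cis \<theta>) * (1 - q * z0^3) powr (-2/3)
      + ((-2/3) * (1 - q * z0^3) powr (-2/3 - 1)) * (-(q * (3 * z0^2))) * (\<i> * cis \<theta> * z0) = fx \<theta> s"
    unfolding fx_def q_def z0_def by (simp add: ww_def algebra_simps power2_eq_square power3_eq_cube)
  have "((\<lambda>x. g (of_real x)) has_vector_derivative fx \<theta> s) (at s within U)"
    by (rule has_vector_derivative_real_field) (use d4 D in \<open>simp add: z0_def\<close>)
  moreover have "g (of_real x) = GG \<theta> x" for x by (simp add: g_def GG_def ww_def q_def)
  ultimately show ?thesis by simp
qed

lemma fx_integral:
  assumes "0 < \<theta>" "\<theta> < 2*pi/3"
  shows "(fx \<theta> has_integral DD \<theta>) {0..1}"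
proof -
  have "(fx \<theta> has_integral (GG \<theta> 1 - GG \<theta> 0)) {0..1}"
    by (rule fundamental_theorem_of_calculus) (auto intro!: GG_ds ww_Re_pos assms)
  moreover have "GG \<theta> 1 - GG \<theta> 0 = DD \<theta>" by (simp add: GG_def DD_def ww_def)
  ultimately show ?thesis by simp
qed


lemma ww_pair_cont:
  assumes U: "U \<subseteq> {0<..<2*pi/3}"
  shows "continuous_on (U \<times> {0..1}) (\<lambda>p. ww (fst p) (snd p) powr a)"
proof (rule continuous_on_powr_complex)
  have pos: "Re (ww (fst p) (snd p)) > 0" if "p \<in> U \<times> {0..1}" for p
    using that U by (intro ww_Re_pos) auto
  show "U \<times> {0..1} \<subseteq> {p. 0 \<le> Re (ww (fst p) (snd p)) \<or> Im (ww (fst p) (snd p)) \<noteq> 0}"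
    using pos by (auto intro: less_imp_le)
  show "\<And>p. p \<in> U \<times> {0..1} \<Longrightarrow> ww (fst p) (snd p) = 0 \<Longrightarrow> 0 < Re a"
    using pos by fastforce
  show "continuous_on (U \<times> {0..1}) (\<lambda>p. ww (fst p) (snd p))"
    unfolding ww_def by (intro continuous_intros)
qed (rule continuous_on_const)

lemma fx_cont:
  assumes U: "U \<subseteq> {0<..<2*pi/3}"
  shows "continuous_on (U \<times> {0..1}) (\<lambda>(x, t). fx x t)"
proof -
  note c1 = ww_pair_cont[OF U, of "-2/3"]
  note c2 = ww_pair_cont[OF U, of "-2/3 - 1"]
  have "continuous_on (U \<times> {0..1}) (\<lambda>p. fx (fst p) (snd p))"
    unfolding fx_def by (intro continuous_on_add continuous_on_mult continuous_on_const continuous_on_minus c1 c2 continuous_intros)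
  then show ?thesis by (simp add: case_prod_beta)
qed

lemma FF_deriv:
  assumes "0 < \<theta>" "\<theta> < 2*pi/3"
  shows "(FF has_vector_derivative DD \<theta>) (at \<theta>)"
proof -
  define \<delta> where "\<delta> = min \<theta> (2*pi/3 - \<theta>) / 2"
  have d: "\<delta> > 0" using assms by (simp add: \<delta>_def)
  define U where "U = {\<theta> - \<delta> .. \<theta> + \<delta>}"
  have d1: "\<delta> \<le> \<theta>/2" and d2: "\<delta> \<le> (2*pi/3 - \<theta>)/2" unfolding \<delta>_def by auto
  have U: "U \<subseteq> {0<..<2*pi/3}"
  proof
    fix x assume "x \<in> U"
    then have "\<theta> - \<delta> \<le> x" "x \<le> \<theta> + \<delta>" by (auto simp: U_def)
    then show "x \<in> {0<..<2*pi/3}" using d1 d2 assms by auto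
  qed
  have tU: "\<theta> \<in> U" using d by (simp add: U_def)
  have L: "((\<lambda>x. integral (cbox 0 1) (fI x)) has_vector_derivative integral (cbox 0 1) (fx \<theta>)) (at \<theta> within U)"
  proof (rule leibniz_rule_vector_derivative)
    fix x t assume x: "x \<in> U" and t: "t \<in> cbox (0::real) 1"
    have "Re (ww x t) > 0" using x t U by (intro ww_Re_pos) (auto simp: cbox_interval)
    then show "((\<lambda>x. fI x t) has_vector_derivative fx x t) (at x within U)" by (rule fI_dtheta)
  next
    fix x assume x: "x \<in> U"
    then have "0 < x" "x < 2*pi/3" using U by auto
    then show "fI x integrable_on cbox 0 1"
      unfolding cbox_interval by (intro integrable_continuous_interval fI_cont)
  next
    show "continuous_on (U \<times> cbox 0 1) (\<lambda>(x, t). fx x t)"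
      unfolding cbox_interval by (rule fx_cont[OF U])
  qed (use tU in \<open>auto simp: U_def\<close>)
  have "integral (cbox 0 1) (fx \<theta>) = DD \<theta>"
    unfolding cbox_interval by (rule integral_unique[OF fx_integral[OF assms]])
  moreover have "at \<theta> within U = at \<theta>"
    by (rule at_within_interior) (use d in \<open>simp add: U_def\<close>)
  ultimately have L': "((\<lambda>x. integral (cbox 0 1) (fI x)) has_vector_derivative DD \<theta>) (at \<theta>)"
    using L by simp
  show ?thesis
  proof (rule has_vector_derivative_transform_within_open[OF L'])
    show "open {0<..<2*pi/3::real}" by simp
    show "\<theta> \<in> {0<..<2*pi/3}" using assms by simp
    fix y :: real assume "y \<in> {0<..<2*pi/3}"
    then show "integral (cbox 0 1) (fI y) = FF y"
      unfolding cbox_interval by (intro FF_integral) auto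
  qed
qed

lemma DD_line:
  assumes "0 < \<theta>" "\<theta> < 2*pi/3"
  shows "Re (DD \<theta>) + sqrt 3 * Im (DD \<theta>) = 0"
proof -
  define t where "t = 3*\<theta>/2"
  have t: "0 < t" "t < pi" using assms by (auto simp: t_def)
  have st: "sin t > 0" using t by (intro sin_gt_zero) auto
  define L where "L = ln (2 * sin t)"
  have eL: "exp L = 2 * sin t" using st by (simp add: L_def)
  have th: "3*\<theta> = 2*t" by (simp add: t_def)
  have e1: "1 - cis (3*\<theta>) = exp (Complex L (t - pi/2))"
  proof -
    have "exp (Complex L (t - pi/2)) = of_real (exp L) * cis (t - pi/2)"
      by (simp add: exp_eq_polar)
    also have "\<dots> = 1 - cis (2*t)"
      unfolding eL by (simp add: complex_eq_iff sin_diff cos_diff cos_double_sin sin_double power2_eq_square)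
    finally show ?thesis using th by simp
  qed
  have nz: "1 - cis (3*\<theta>) \<noteq> 0" using e1 by simp
  have Ln: "Ln (1 - cis (3*\<theta>)) = Complex L (t - pi/2)"
    by (rule Ln_unique[OF e1[symmetric]]) (use t in auto)
  have p: "(1 - cis (3*\<theta>)) powr (-2/3) = exp (Complex (-2/3*L) (pi/3 - \<theta>))"
  proof -
    have "(1 - cis (3*\<theta>)) powr (-2/3) = exp ((-2/3) * Ln (1 - cis (3*\<theta>)))"
      using nz by (simp add: powr_def)
    also have "(-2/3) * Ln (1 - cis (3*\<theta>)) = Complex (-2/3*L) (pi/3 - \<theta>)"
      unfolding Ln by (simp add: complex_eq_iff t_def field_simps)
    finally show ?thesis .
  qed
  have "DD \<theta> = \<i> * cis \<theta> * (of_real (exp (-2/3*L)) * cis (pi/3 - \<theta>))"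
    unfolding DD_def p by (simp add: exp_eq_polar)
  also have "\<dots> = of_real (exp (-2/3*L)) * (\<i> * (cis \<theta> * cis (pi/3 - \<theta>)))" by (simp add: mult_ac)
  also have "cis \<theta> * cis (pi/3 - \<theta>) = cis (pi/3)" by (simp add: cis_mult)
  finally have "DD \<theta> = of_real (exp (-2/3*L)) * (\<i> * cis (pi/3))" .
  then show ?thesis by (simp add: sin_60 cos_60 algebra_simps)
qed

lemma cubic_id:
  assumes "Re w + sqrt 3 * Im w = c" "c > 0"
  shows "(norm w)^2 = c^2/3 + 2/(3*c) * Re (w^3)"
proof -
  define x where "x = Re w"
  define y where "y = Im w"
  have s2: "sqrt 3 * sqrt 3 = (3::real)" by simp
  have ce: "c = x + sqrt 3 * y" using assms by (simp add: x_def y_def)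
  have n: "(norm w)^2 = x^2 + y^2" by (simp add: cmod_power2 x_def y_def)
  have r: "Re (w^3) = x^3 - 3*x*y^2"
    by (simp add: x_def y_def power3_eq_cube power2_eq_square algebra_simps)
  have key: "3*c*(x^2 + y^2) = c^3 + 2*(x^3 - 3*x*y^2)"
    using ce s2 by algebra
  show ?thesis unfolding n r using assms(2) key by (simp add: field_simps power2_eq_square power3_eq_cube)
qed

lemma PP_one: "PP 1 = of_real II"
proof -
  have "(\<lambda>n. of_real (aa n) :: complex) sums of_real (Beta (1/3) (1/3) / 3)"
    by (rule sums_of_real[OF aa_sums])
  then have "(\<lambda>n. of_real (aa n) :: complex) sums of_real II" by (simp only: II_def)
  then show ?thesis unfolding PP_def by (simp add: sums_iff)
qed

lemma FF_cont: "continuous_on UNIV FF"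
proof -
  have "continuous_on UNIV (\<lambda>\<theta>. PP (cis (3*\<theta>)))"
    by (rule continuous_on_compose2[OF PP_cont]) (auto intro!: continuous_intros)
  then show ?thesis unfolding FF_def by (intro continuous_intros)
qed

lemma FF_line:
  assumes "0 \<le> \<theta>" "\<theta> < 2*pi/3"
  shows "Re (FF \<theta>) + sqrt 3 * Im (FF \<theta>) = II"
proof -
  define h where "h x = Re (FF x) + sqrt 3 * Im (FF x)" for x
  have h0: "h 0 = II" by (simp add: h_def FF_def PP_one)
  show ?thesis
  proof (cases "\<theta> = 0")
    case True then show ?thesis using h0 by (simp add: h_def)
  next
    case False
    then have tpos: "0 < \<theta>" using assms by simp
    have "h \<theta> = h 0"
    proof (rule DERIV_isconst_end[OF tpos])
      show "continuous_on {0..\<theta>} h" unfolding h_def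
        by (intro continuous_intros continuous_on_subset[OF FF_cont]) auto
      fix x assume x: "0 < x" "x < \<theta>"
      have d: "(FF has_vector_derivative DD x) (at x)" using x assms by (intro FF_deriv) auto
      have "(h has_field_derivative (Re (DD x) + sqrt 3 * Im (DD x))) (at x)"
        unfolding h_def by (intro DERIV_add DERIV_cmult has_field_derivative_Re[OF d] has_field_derivative_Im[OF d])
      moreover have "Re (DD x) + sqrt 3 * Im (DD x) = 0" using x assms by (intro DD_line) auto
      ultimately show "(h has_field_derivative 0) (at x)" by simp
    qed
    then show ?thesis using h0 by (simp add: h_def)
  qed
qed

lemma boundary: "0 \<le> \<phi> \<Longrightarrow> \<phi> < 2*pi \<Longrightarrow>
  (norm (PP (cis \<phi>)))^2 = II^2/3 + 2/(3*II) * Re (cis \<phi> * PP (cis \<phi>)^3)"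
proof -
  assume a: "0 \<le> \<phi>" "\<phi> < 2*pi"
  have l: "Re (FF (\<phi>/3)) + sqrt 3 * Im (FF (\<phi>/3)) = II" using a by (intro FF_line) auto
  have "(norm (FF (\<phi>/3)))^2 = II^2/3 + 2/(3*II) * Re ((FF (\<phi>/3))^3)"
    by (rule cubic_id[OF l II_pos])
  moreover have "norm (FF (\<phi>/3)) = norm (PP (cis \<phi>))" by (simp add: FF_def norm_mult)
  moreover have "(FF (\<phi>/3))^3 = cis \<phi> * PP (cis \<phi>)^3"
  proof -
    have "cis (\<phi>/3) ^ 3 = cis \<phi>" unfolding Complex.DeMoivre by simp
    then show ?thesis by (simp add: FF_def power_mult_distrib)
  qed
  ultimately show ?thesis by simp
qed



definition QQ :: "complex \<Rightarrow> complex \<Rightarrow> real" where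
  "QQ p q = (norm p)^2 - II^2/3 - 2/(3*II) * Re (q * p^3)"

lemma QQ_diff:
  assumes "norm p \<le> II" "norm r \<le> II" "norm q = 1"
  shows "\<bar>QQ p q - QQ r q\<bar> \<le> 4*II*norm (p - r)"
proof -
  have II: "II > 0" by (rule II_pos)
  have 1: "\<bar>(norm p)^2 - (norm r)^2\<bar> \<le> norm (p - r) * (2*II)"
  proof -
    have e: "(norm p)^2 - (norm r)^2 = (norm p - norm r) * (norm p + norm r)"
      by (simp add: power2_eq_square algebra_simps)
    have "\<bar>(norm p - norm r) * (norm p + norm r)\<bar> = \<bar>norm p - norm r\<bar> * (norm p + norm r)"
      by (simp add: abs_mult)
    also have "\<dots> \<le> norm (p - r) * (2*II)"
      by (rule mult_mono) (use assms norm_triangle_ineq3[of p r] in auto)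
    finally show ?thesis unfolding e .
  qed
  have 2: "norm (p^3 - r^3) \<le> norm (p - r) * (3*II^2)"
  proof -
    have "p^3 - r^3 = (p - r) * (p^2 + p*r + r^2)" by (simp add: power2_eq_square power3_eq_cube algebra_simps)
    then have e: "norm (p^3 - r^3) = norm (p - r) * norm (p^2 + p*r + r^2)" by (simp add: norm_mult)
    have t: "norm (p^2 + p*r + r^2) \<le> norm (p^2) + norm (p*r) + norm (r^2)"
      by (rule order_trans[OF norm_triangle_ineq add_right_mono[OF norm_triangle_ineq]])
    have a1: "norm (p^2) \<le> II^2" unfolding norm_power by (rule power_mono) (use assms in auto)
    have a2: "norm (r^2) \<le> II^2" unfolding norm_power by (rule power_mono) (use assms in auto)
    have a3: "norm (p*r) \<le> II^2" unfolding norm_mult power2_eq_square by (rule mult_mono) (use assms II in auto)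
    have "norm (p^2 + p*r + r^2) \<le> 3*II^2" using t a1 a2 a3 by linarith
    then have "norm (p - r) * norm (p^2 + p*r + r^2) \<le> norm (p - r) * (3*II^2)"
      by (rule mult_left_mono) simp
    then show ?thesis unfolding e .
  qed
  have 3: "\<bar>Re (q * p^3) - Re (q * r^3)\<bar> \<le> norm (p - r) * (3*II^2)"
  proof -
    have "Re (q * p^3) - Re (q * r^3) = Re (q * (p^3 - r^3))" by (simp only: right_diff_distrib minus_complex.sel)
    then have "\<bar>Re (q * p^3) - Re (q * r^3)\<bar> \<le> norm (q * (p^3 - r^3))" by (simp only: abs_Re_le_cmod)
    also have "norm (q * (p^3 - r^3)) = norm (p^3 - r^3)" using assms(3) by (simp only: norm_mult mult_1_left)
    finally show ?thesis using 2 by linarith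
  qed
  define A where "A = (norm p)^2 - (norm r)^2"
  define B where "B = Re (q * p^3) - Re (q * r^3)"
  define c where "c = 2/(3*II)"
  have c: "c > 0" using II by (simp add: c_def)
  have "QQ p q - QQ r q = A - c * B"
    unfolding QQ_def A_def B_def c_def by (simp add: algebra_simps)
  have "\<bar>A - c * B\<bar> \<le> \<bar>A\<bar> + \<bar>c * B\<bar>" by (rule abs_triangle_ineq4)
  also have "\<bar>c * B\<bar> = c * \<bar>B\<bar>" using c by (simp add: abs_mult)
  finally have "\<bar>QQ p q - QQ r q\<bar> \<le> \<bar>A\<bar> + c * \<bar>B\<bar>" using \<open>QQ p q - QQ r q = A - c * B\<close> by simp
  also have "\<dots> \<le> norm (p - r) * (2*II) + c * (norm (p - r) * (3*II^2))"
    using 1 3 c unfolding A_def B_def by (intro add_mono mult_left_mono) auto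
  also have "c * (norm (p - r) * (3*II^2)) = norm (p - r) * (2*II)"
    using II by (simp add: c_def field_simps power2_eq_square)
  finally show ?thesis by simp
qed

lemma qq_norm: "norm (qq M j) = 1" by (simp add: qq_def)

lemma QQ_PP: "j < M \<Longrightarrow> QQ (PP (qq M j)) (qq M j) = 0"
proof -
  assume j: "j < M"
  have "0 \<le> 2*pi*real j/real M" by simp
  moreover have "2*pi*real j/real M < 2*pi" using j by (simp add: field_simps)
  ultimately show ?thesis unfolding QQ_def qq_def using boundary by simp
qed

lemma S_bound:
  assumes "N > 0"
  shows "\<bar>(\<Sum>n<N. (aa n)^2) - II^2/3\<bar> \<le> 4*II*(II - (\<Sum>n<N. aa n))"
proof -
  define M where "M = 3*N"
  have M: "M > 0" "N \<le> M" "3*N \<le> M" using assms by (auto simp: M_def)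
  have "(\<Sum>j<M. QQ (PN N (qq M j)) (qq M j)) =
        (\<Sum>j<M. (norm (PN N (qq M j)))^2) - real M * (II^2/3) - 2/(3*II) * Re (\<Sum>j<M. qq M j * PN N (qq M j)^3)"
    unfolding QQ_def sum_subtractf sum_constant card_lessThan sum_distrib_left[symmetric] Re_sum[symmetric]
    by simp
  also have "\<dots> = real M * ((\<Sum>n<N. (aa n)^2) - II^2/3)"
    using avg_sq[OF M(2)] avg_cube[OF M(3)] by (simp add: algebra_simps)
  finally have e1: "(\<Sum>j<M. QQ (PN N (qq M j)) (qq M j)) = real M * ((\<Sum>n<N. (aa n)^2) - II^2/3)" .
  have e2: "(\<Sum>j<M. QQ (PP (qq M j)) (qq M j)) = 0" by (simp add: QQ_PP)
  have "real M * \<bar>(\<Sum>n<N. (aa n)^2) - II^2/3\<bar> = \<bar>(\<Sum>j<M. QQ (PP (qq M j)) (qq M j) - QQ (PN N (qq M j)) (qq M j))\<bar>"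
    using e1 e2 by (simp add: sum_subtractf abs_mult)
  also have "\<dots> \<le> (\<Sum>j<M. \<bar>QQ (PP (qq M j)) (qq M j) - QQ (PN N (qq M j)) (qq M j)\<bar>)"
    by (rule sum_abs)
  also have "\<dots> \<le> (\<Sum>j<M. 4*II*(II - (\<Sum>n<N. aa n)))"
  proof (rule sum_mono)
    fix j
    have "\<bar>QQ (PP (qq M j)) (qq M j) - QQ (PN N (qq M j)) (qq M j)\<bar> \<le> 4*II*norm (PP (qq M j) - PN N (qq M j))"
      by (rule QQ_diff) (simp_all add: qq_norm PP_bound PN_bound)
    also have "\<dots> \<le> 4*II*(II - (\<Sum>n<N. aa n))"
      using II_pos by (intro mult_left_mono PP_PN) (simp_all add: qq_norm)
    finally show "\<bar>QQ (PP (qq M j)) (qq M j) - QQ (PN N (qq M j)) (qq M j)\<bar> \<le> 4*II*(II - (\<Sum>n<N. aa n))" .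
  qed
  also have "\<dots> = real M * (4*II*(II - (\<Sum>n<N. aa n)))" by simp
  finally show ?thesis using M(1) by (simp add: mult_le_cancel_left_pos)
qed

lemma aa_sq_sums: "(\<lambda>n. (aa n)^2) sums (II^2/3)"
proof -
  have T: "(\<lambda>N. 4*II*(II - (\<Sum>n<N. aa n))) \<longlonglongrightarrow> 4*II*(II - II)"
    using aa_sums unfolding sums_def II_def[symmetric] by (intro tendsto_intros)
  have "(\<lambda>N. (\<Sum>n<N. (aa n)^2) - II^2/3) \<longlonglongrightarrow> 0"
  proof (rule Lim_null_comparison)
    show "\<forall>\<^sub>F N in sequentially. norm ((\<Sum>n<N. (aa n)^2) - II^2/3) \<le> 4*II*(II - (\<Sum>n<N. aa n))"
      using eventually_gt_at_top[of 0] by eventually_elim (simp add: S_bound)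
    show "(\<lambda>N. 4*II*(II - (\<Sum>n<N. aa n))) \<longlonglongrightarrow> 0" using T by simp
  qed
  then have "(\<lambda>N. ((\<Sum>n<N. (aa n)^2) - II^2/3) + II^2/3) \<longlonglongrightarrow> 0 + II^2/3"
    by (intro tendsto_intros)
  then show ?thesis by (simp add: sums_def)
qed

theorem mainTheorem11:
  shows "summable (hyp4F3_term (1/3) (1/3) (2/3) (2/3) (4/3) (4/3) 1 1)
    \<and> hyp4F3 (1/3) (1/3) (2/3) (2/3) (4/3) (4/3) 1 1 = (Beta (1/3) (1/3))^2 / 27"
proof -
  have s: "hyp4F3_term (1/3) (1/3) (2/3) (2/3) (4/3) (4/3) 1 1 sums (II^2/3)"
  proof -
    have "hyp4F3_term (1/3) (1/3) (2/3) (2/3) (4/3) (4/3) 1 1 = (\<lambda>n. (aa n)^2)"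
      by (rule ext) (rule term_eq)
    then show ?thesis using aa_sq_sums by simp
  qed
  have "II^2/3 = (Beta (1/3) (1/3))^2 / 27" by (simp add: II_def power2_eq_square)
  with s show ?thesis unfolding hyp4F3_def by (auto simp: sums_iff)
qed


end
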